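(* Let $1\le r\le n$, let $g$ be a real-valued function differentiable on an open neighbourhood of $\mathrm{St}(r,n,\mathbb{C})$ in $\mathbb{C}^{n\times r}$, and let $\tilde g(Z)=g(\sigma(Z))$, where $\sigma$ keeps the first $r$ columns. Let $U_*\in\mathcal{U}_n$ and $X_*=\sigma(U_* )\in\mathrm{St}(r,n,\mathbb{C})$. Then $\operatorname{grad}\tilde g(U_* )=0$ if and only if $\operatorname{grad}g(X_* )=0$.
   Context: $\mathrm{St}(r,n,\mathbb{C})=\{X\in\mathbb{C}^{n\times r}:X^HX=I_r\}$ and $\mathcal{U}_n=\mathrm{St}(n,n,\mathbb{C})$. $\mathbb{C}^{n\times r}$ is a real Euclidean space with inner product $\mathrm{Re}\,\mathrm{tr}(X^HY)$; the Euclidean gradient of a real function $F$ is $\nabla F(X)=\frac{\partial F}{\partial X^{\Re}}+\mathrm{i}\frac{\partial F}{\partial X^{\Im}}$. With $\mathrm{skew}(P)=\frac12(P-P^H)$, the Riemannian gradient on the Stiefel manifold is $\operatorname{grad}g(X)=(I_n-XX^H)\nabla g(X)+X\,\mathrm{skew}(X^H\nabla g(X))$, and on $\mathcal{U}_n$ it is $\operatorname{grad}\tilde g(U)=U\,\mathrm{skew}(U^H\nabla\tilde g(U))$. *)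

theory Defs
  imports "HOL-Analysis.Analysis"
begin

text \<open>Complex matrices with row index type 'a and column index type 'b:
  complex^'b^'a. This is a real Euclidean space whose inner product is
  the sum of Re (cnj x * y) over entries, i.e. Re tr(X^H Y).\<close>

definition cadj :: "complex^'b^'a \<Rightarrow> complex^'a^'b" where
  "cadj A = (\<chi> i j. cnj (A $ j $ i))"

definition stiefel :: "(complex^'r^'n) set" where
  "stiefel = {X. cadj X ** X = mat 1}"

definition unitary_group :: "(complex^'n^'n) set" where
  "unitary_group = stiefel"

definition skew :: "complex^'a^'a \<Rightarrow> complex^'a^'a" where
  "skew P = scaleR (1/2) (P - cadj P)"

definition munit :: "'a \<Rightarrow> 'b \<Rightarrow> complex \<Rightarrow> complex^'b^'a" where
  "munit i j c = (\<chi> a b. if a = i \<and> b = j then c else 0)"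

text \<open>Euclidean gradient: dF/dRe X + i dF/dIm X, entrywise, the partial
  derivatives taken via the (Frechet) derivative of F at X.\<close>
definition egrad :: "(complex^'b^'a \<Rightarrow> real) \<Rightarrow> complex^'b^'a \<Rightarrow> complex^'b^'a" where
  "egrad F X = (\<chi> i j. Complex (frechet_derivative F (at X) (munit i j 1))
                                (frechet_derivative F (at X) (munit i j \<i>)))"

definition rgrad_stiefel :: "(complex^'r^'n \<Rightarrow> real) \<Rightarrow> complex^'r^'n \<Rightarrow> complex^'r^'n" where
  "rgrad_stiefel g X = (mat 1 - X ** cadj X) ** egrad g X + X ** skew (cadj X ** egrad g X)"

definition rgrad_unitary :: "(complex^'n^'n \<Rightarrow> real) \<Rightarrow> complex^'n^'n \<Rightarrow> complex^'n^'n" where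
  "rgrad_unitary g U = U ** skew (cadj U ** egrad g U)"

text \<open>Order-preserving embedding of the column index type 'r onto the initial
  segment of the (linearly ordered, finite) index type 'n: the k-th smallest
  element of 'r goes to the k-th smallest element of 'n.\<close>
definition col_emb :: "'r::{finite,linorder} \<Rightarrow> 'n::{finite,linorder}" where
  "col_emb j = sorted_list_of_set (UNIV :: 'n set) ! card {k. k < j}"

definition sigma :: "((complex, 'n::{finite,linorder}) vec, 'n) vec \<Rightarrow> ((complex, 'r::{finite,linorder}) vec, 'n) vec" where
  "sigma Z = (\<chi> i j. Z $ i $ col_emb j)"

end

theory Submission imports Defs begin
lemma cadj_cadj[simp]: "cadj (cadj A) = A"
  by (simp add: cadj_def vec_eq_iff)

lemma cadj_mult: "cadj (A ** B) = cadj B ** cadj (A::complex^'b^'a)"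
  by (simp add: cadj_def matrix_matrix_mult_def vec_eq_iff mult.commute)

lemma cadj_diff: "cadj (A - B) = cadj A - cadj (B::complex^'b^'a)"
  by (simp add: cadj_def vec_eq_iff)

lemma cadj_mat1[simp]: "cadj (mat 1 :: complex^'a^'a) = mat 1"
  by (simp add: cadj_def mat_def vec_eq_iff)

lemma cadj_zero[simp]: "cadj (0 :: complex^'a^'b) = 0"
  by (simp add: cadj_def vec_eq_iff)

lemma skew_zero_iff: "skew P = 0 \<longleftrightarrow> cadj P = P"
  by (auto simp: skew_def)

lemma mm_sub_l: "(A::complex^'b^'a) ** (B - C) = A ** B - A ** C"
  by (simp add: matrix_matrix_mult_def vec_eq_iff algebra_simps sum_subtractf)

lemma mm_sub_r: "((B::complex^'b^'a) - C) ** A = B ** A - C ** A"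
  by (simp add: matrix_matrix_mult_def vec_eq_iff algebra_simps sum_subtractf)

lemma mm_scaleR_r: "(A::complex^'b^'a) ** (c *\<^sub>R B) = c *\<^sub>R (A ** B)"
  by (simp add: matrix_matrix_mult_def vec_eq_iff scaleR_sum_right)

lemma skew_mult: "(A::complex^'b^'a) ** skew P = (1/2) *\<^sub>R (A ** P - A ** cadj P)"
  by (simp add: skew_def mm_scaleR_r mm_sub_l)

lemma key_algebra:
  fixes A :: "complex^'r^'n" and E :: "complex^'r^'n"
  assumes EE: "cadj E ** E = mat 1"
  shows "skew (A ** cadj E) = 0 \<longleftrightarrow> (mat 1 - E ** cadj E) ** A + E ** skew (cadj E ** A) = 0"
proof
  assume "skew (A ** cadj E) = 0"
  hence h: "E ** cadj A = A ** cadj E" by (simp add: skew_zero_iff cadj_mult)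
  have A1: "A = E ** (cadj A ** E)"
  proof -
    have "A = (A ** cadj E) ** E" by (simp add: EE flip: matrix_mul_assoc)
    also have "\<dots> = E ** (cadj A ** E)" by (simp add: h[symmetric] matrix_mul_assoc)
    finally show ?thesis .
  qed
  have P: "(mat 1 - E ** cadj E) ** A = 0"
  proof -
    have "(E ** cadj E) ** A = E ** (cadj E ** E) ** (cadj A ** E)"
      by (subst A1) (simp add: matrix_mul_assoc)
    also have "\<dots> = A" using A1 EE by simp
    finally show ?thesis by (simp add: mm_sub_r)
  qed
  have "cadj E ** A = cadj A ** E"
    by (subst A1) (simp add: matrix_mul_assoc EE)
  hence "skew (cadj E ** A) = 0" by (simp add: skew_zero_iff cadj_mult)
  thus "(mat 1 - E ** cadj E) ** A + E ** skew (cadj E ** A) = 0" using P by simp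
next
  assume B: "(mat 1 - E ** cadj E) ** A + E ** skew (cadj E ** A) = 0"
  have "cadj E ** ((mat 1 - E ** cadj E) ** A + E ** skew (cadj E ** A)) = skew (cadj E ** A)"
    by (simp add: matrix_add_ldistrib matrix_mul_assoc mm_sub_l mm_sub_r EE)
  hence S: "skew (cadj E ** A) = 0" using B by simp
  hence P: "A = E ** (cadj E ** A)" using B by (simp add: mm_sub_r matrix_mul_assoc)
  have H: "cadj A ** E = cadj E ** A" using S by (simp add: skew_zero_iff cadj_mult)
  have "cadj (A ** cadj E) = A ** cadj E"
    apply (subst (1 2) P) by (simp add: cadj_mult matrix_mul_assoc H)
  thus "skew (A ** cadj E) = 0" by (simp add: skew_zero_iff)
qed

lemma col_emb_inj:
  assumes "CARD(('r::{finite,linorder})) \<le> CARD(('n::{finite,linorder}))"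
  shows "inj (col_emb :: 'r \<Rightarrow> 'n)"
proof
  fix x y :: 'r assume h: "(col_emb x :: 'n) = col_emb y"
  let ?c = "\<lambda>j::'r. card {k. k < j}"
  have lt: "?c j < CARD('n)" for j
  proof -
    have "{k. k < j} \<subset> UNIV" by auto
    hence "?c j < CARD('r)" by (simp add: psubset_card_mono)
    thus ?thesis using assms by simp
  qed
  have mono: "a < b \<Longrightarrow> ?c a < ?c b" for a b :: 'r
    by (rule psubset_card_mono) (auto intro: order.strict_trans)
  have "?c x = ?c y"
  proof -
    let ?l = "sorted_list_of_set (UNIV :: 'n set)"
    have "distinct ?l" "length ?l = CARD('n)" by auto
    thus ?thesis using h lt[of x] lt[of y] unfolding col_emb_def
      by (simp add: nth_eq_iff_index_eq)
  qed
  thus "x = y" using mono[of x y] mono[of y x] by (cases x y rule: linorder_cases) auto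
qed

definition Emat :: "complex^('r::{finite,linorder})^('n::{finite,linorder})" where
  "Emat = (\<chi> a j. if a = col_emb j then 1 else 0)"

lemma sigma_mult: "sigma Z = Z ** Emat"
  by (simp add: sigma_def Emat_def matrix_matrix_mult_def vec_eq_iff if_distrib if_distribR
      sum.delta' cong: if_cong)

lemma delta_prod_sum:
  "(\<Sum>a\<in>UNIV. (if a = (x::'n::finite) then (1::complex) else 0) * (if a = y then 1 else 0))
     = (if x = y then 1 else 0)"
proof -
  have "(\<Sum>a\<in>UNIV. (if a = x then (1::complex) else 0) * (if a = y then 1 else 0))
       = (\<Sum>a\<in>UNIV. if a = x then (if x = y then 1 else 0) else 0)"
    by (rule sum.cong) auto
  also have "\<dots> = (if x = y then 1 else 0)" by simp
  finally show ?thesis .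
qed

lemma EE:
  fixes E :: "complex^('r::{finite,linorder})^('n::{finite,linorder})"
  assumes "inj (col_emb :: 'r \<Rightarrow> 'n)" and "E = Emat"
  shows "cadj E ** E = mat 1"
proof -
  have c: "cadj E = (\<chi> j a. if a = col_emb j then 1 else 0)"
    unfolding assms(2) by (simp add: cadj_def Emat_def vec_eq_iff)
  show ?thesis
    unfolding c unfolding assms(2) matrix_matrix_mult_def Emat_def mat_def
    by (simp add: vec_eq_iff delta_prod_sum inj_eq[OF assms(1)])
qed

lemma linear_sigma:
  fixes s :: "((complex, 'n::{finite,linorder}) vec, 'n) vec \<Rightarrow> ((complex, 'r::{finite,linorder}) vec, 'n) vec"
  assumes "s = sigma"
  shows "linear s"
  unfolding assms
  by (rule linearI) (simp_all add: sigma_def vec_eq_iff)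

lemma egrad_comp:
  fixes g :: "((complex, 'r::{finite,linorder}) vec, 'n::{finite,linorder}) vec \<Rightarrow> real"
    and U :: "((complex, 'n) vec, 'n) vec"
  assumes inj: "inj (col_emb :: 'r \<Rightarrow> 'n)"
    and d: "g differentiable (at (sigma U))"
  shows "egrad (g \<circ> sigma) U = egrad g (sigma U) ** cadj Emat"
proof -
  define D where "D = frechet_derivative g (at (sigma U))"
  have gD: "(g has_derivative D) (at (sigma U))" using d unfolding D_def frechet_derivative_works .
  hence lD: "linear D" using has_derivative_linear by blast
  have "((g \<circ> sigma) has_derivative (D \<circ> sigma)) (at U)"
    by (rule diff_chain_at[OF linear_imp_has_derivative[OF linear_sigma[OF refl]] gD])
  hence FD: "frechet_derivative (g \<circ> sigma) (at U) = D \<circ> sigma"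
    by (simp add: frechet_derivative_at[symmetric])
  show ?thesis
  proof (simp add: vec_eq_iff, intro allI)
    fix i k :: 'n
    show "egrad (g \<circ> sigma) U $ i $ k = (egrad g (sigma U) ** cadj Emat) $ i $ k"
    proof (cases "k \<in> range (col_emb :: 'r \<Rightarrow> 'n)")
      case True
      then obtain j0 :: 'r where k: "k = col_emb j0" by auto
      have s: "sigma (munit i k c) = munit i j0 c" for c
        using inj by (auto simp: sigma_def munit_def vec_eq_iff k inj_eq)
      have "(\<Sum>j\<in>UNIV. egrad g (sigma U) $ i $ j * cnj (if k = col_emb j then 1 else 0))
            = egrad g (sigma U) $ i $ j0"
      proof -
        have "(\<Sum>j\<in>UNIV. egrad g (sigma U) $ i $ j * cnj (if k = col_emb j then 1 else 0))
              = (\<Sum>j\<in>UNIV. if j0 = j then egrad g (sigma U) $ i $ j else 0)"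
          by (rule sum.cong) (auto simp: k inj_eq[OF inj])
        also have "\<dots> = egrad g (sigma U) $ i $ j0" by simp
        finally show ?thesis .
      qed
      thus ?thesis
        by (simp add: egrad_def FD s D_def matrix_matrix_mult_def cadj_def Emat_def)
    next
      case False
      have nk: "col_emb j \<noteq> k" for j :: 'r using False by blast
      have s: "sigma (munit i k c) = (0 :: ((complex,'r) vec,'n) vec)" for c
        using nk by (simp add: sigma_def munit_def vec_eq_iff)
      have "(\<Sum>j\<in>UNIV. egrad g (sigma U) $ i $ j * cnj (if k = col_emb j then 1 else 0)) = 0"
        using nk by (simp add: eq_commute[of k])
      thus ?thesis using linear_0[OF lD]
        by (simp add: egrad_def FD s matrix_matrix_mult_def cadj_def Emat_def complex_eq_iff)
    qed
  qed
qed

lemma U_cancel: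
  fixes U :: "complex^'n^'n" and M :: "complex^'m^'n"
  assumes "cadj U ** U = mat 1"
  shows "U ** M = 0 \<longleftrightarrow> M = 0"
proof
  assume "U ** M = 0"
  hence "cadj U ** (U ** M) = 0" by simp
  thus "M = 0" by (simp add: matrix_mul_assoc assms)
qed simp

theorem theorem2p7:
  fixes g :: "((complex, 'r::{finite,linorder}) vec, 'n::{finite,linorder}) vec \<Rightarrow> real"
    and S :: "((complex, 'r) vec, 'n) vec set"
    and U :: "((complex, 'n) vec, 'n) vec"
  assumes "CARD('r) \<le> CARD('n)"
    and "open S" and "stiefel \<subseteq> S" and "g differentiable_on S"
    and "U \<in> unitary_group"
  shows "rgrad_unitary (g \<circ> sigma) U = 0 \<longleftrightarrow> rgrad_stiefel g (sigma U) = 0"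
proof -
  have inj: "inj (col_emb :: 'r \<Rightarrow> 'n)" by (rule col_emb_inj[OF assms(1)])
  define E :: "((complex, 'r) vec, 'n) vec" where "E = Emat"
  have EE: "cadj E ** E = mat 1" by (rule EE[OF inj E_def])
  have UU: "cadj U ** U = mat 1" using assms(5) by (simp add: unitary_group_def stiefel_def)
  hence UU': "U ** cadj U = mat 1" by (simp add: matrix_left_right_inverse)
  define X :: "((complex, 'r) vec, 'n) vec" where "X = sigma U"
  have X: "X = U ** E" by (simp add: X_def E_def sigma_mult)
  have cX: "cadj X = cadj E ** cadj U" by (simp add: X cadj_mult)
  have "cadj X ** X = cadj E ** ((cadj U ** U) ** E)"
    unfolding cX unfolding X by (simp only: matrix_mul_assoc)
  hence "cadj X ** X = mat 1" by (simp add: UU EE)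
  hence "X \<in> stiefel" by (simp add: stiefel_def)
  hence XS: "X \<in> S" using assms(3) by blast
  have d: "g differentiable (at X)"
    using assms(2,4) XS by (metis at_within_open differentiable_on_def)
  define G where "G = egrad g X"
  define A where "A = cadj U ** G"
  have GA: "G = U ** A" by (simp add: A_def matrix_mul_assoc UU')
  have eg: "egrad (g \<circ> sigma) U = G ** cadj E"
    using egrad_comp[OF inj d[unfolded X_def]] by (simp add: G_def X_def E_def)
  have L: "rgrad_unitary (g \<circ> sigma) U = U ** skew (A ** cadj E)"
    by (simp add: rgrad_unitary_def eg A_def matrix_mul_assoc)
  have R: "rgrad_stiefel g X = U ** ((mat 1 - E ** cadj E) ** A + E ** skew (cadj E ** A))"
  proof -
    have 1: "cadj X ** G = cadj E ** A" by (simp add: cX A_def matrix_mul_assoc)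
    have 2: "(mat 1 - X ** cadj X) ** G = U ** ((mat 1 - E ** cadj E) ** A)"
    proof -
      have UUr: "M ** cadj U ** U = M" for M :: "((complex, 'n) vec, 'n) vec"
        by (simp add: UU flip: matrix_mul_assoc)
      have "X ** cadj X ** G = U ** (E ** cadj E ** A)"
        unfolding cX unfolding X GA by (simp add: matrix_mul_assoc UUr)
      thus ?thesis by (simp add: mm_sub_r mm_sub_l GA)
    qed
    show ?thesis unfolding rgrad_stiefel_def G_def[symmetric] 1 2
      by (simp add: matrix_add_ldistrib X matrix_mul_assoc)
  qed
  show ?thesis
    unfolding L X_def[symmetric] R U_cancel[OF UU] by (rule key_algebra[OF EE])
qed

end
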